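(* Let $X\sim P_X$ on $\mathcal{X}$, let $(\Omega_k^\star)_{k=1}^K$ be a measurable partition of $\mathcal{X}$ up to null sets with measurable $f_k^\star$, $\mu=\sum_k\mathbf{1}_{\Omega_k^\star}f_k^\star$, $|\mu(X)|\le B$ a.s. (and $Y=\mu(X)+\xi$, $\mathbb{E}[\xi\mid X]=0$, $\mathbb{E}\xi^2<\infty$). Let experts satisfy $\sup_{k,x}|f_k(x;\theta_k)|\le B_{\mathrm{stu}}$ for all parameters considered. Fix $k$, $\varepsilon\in(0,1/2)$, $\tau>0$ and set $A_{k,\varepsilon}=\Omega_k^\star\cap\mathcal{G}_\varepsilon(\tau;\phi)\cap\{x:p_k^{(\tau)}(x;\phi)\ge1-\varepsilon\}$. Then \[\mathbb{E}\big[(\mu(X)-h_{\theta,\phi,\tau}(X))^2\mathbf{1}_{A_{k,\varepsilon}}(X)\big]\ge\tfrac12\mathbb{E}\big[|f_k(X;\theta_k)-f_k^\star(X)|^2\mathbf{1}_{A_{k,\varepsilon}}(X)\big]-4B_{\mathrm{stu}}^2\varepsilon^2P_X(A_{k,\varepsilon}).\]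
   Context: $p_k^{(\tau)}(x;\phi)=e^{a_k(x;\phi)/\tau}/\sum_je^{a_j(x;\phi)/\tau}$ for router logits $a_k(\cdot;\phi)$; $h_{\theta,\phi,\tau}=\sum_kp_k^{(\tau)}f_k(\cdot;\theta_k)$; $\mathcal{G}_\varepsilon(\tau;\phi)=\{x:\max_jp_j^{(\tau)}(x;\phi)>1-\varepsilon\}$. *)

theory Defs
  imports "HOL-Probability.Probability"
begin

definition gate :: "nat \<Rightarrow> (nat \<Rightarrow> 'q \<Rightarrow> 'x \<Rightarrow> real) \<Rightarrow> real \<Rightarrow> 'q \<Rightarrow> nat \<Rightarrow> 'x \<Rightarrow> real" where
  "gate K a \<tau> \<phi> k x = exp (a k \<phi> x / \<tau>) / (\<Sum>j\<in>{1..K}. exp (a j \<phi> x / \<tau>))"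

definition moe :: "nat \<Rightarrow> (nat \<Rightarrow> 'q \<Rightarrow> 'x \<Rightarrow> real) \<Rightarrow> (nat \<Rightarrow> 'p \<Rightarrow> 'x \<Rightarrow> real)
    \<Rightarrow> (nat \<Rightarrow> 'p) \<Rightarrow> 'q \<Rightarrow> real \<Rightarrow> 'x \<Rightarrow> real" where
  "moe K a f \<theta> \<phi> \<tau> x = (\<Sum>k\<in>{1..K}. gate K a \<tau> \<phi> k x * f k (\<theta> k) x)"

definition confident :: "'x measure \<Rightarrow> nat \<Rightarrow> (nat \<Rightarrow> 'q \<Rightarrow> 'x \<Rightarrow> real) \<Rightarrow> real \<Rightarrow> real \<Rightarrow> 'q \<Rightarrow> 'x set" where
  "confident P K a \<epsilon> \<tau> \<phi> =
     {x \<in> space P. Max ((\<lambda>j. gate K a \<tau> \<phi> j x) ` {1..K}) > 1 - \<epsilon>}"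

definition teacher :: "nat \<Rightarrow> (nat \<Rightarrow> 'x set) \<Rightarrow> (nat \<Rightarrow> 'x \<Rightarrow> real) \<Rightarrow> 'x \<Rightarrow> real" where
  "teacher K \<Omega> fs x = (\<Sum>k\<in>{1..K}. indicator (\<Omega> k) x * fs k x)"

end

theory Submission
  imports Defs
begin

lemma sq_split: "(u + v)\<^sup>2 \<ge> 1/2 * u\<^sup>2 - v\<^sup>2" for u v :: real
proof -
  have "0 \<le> (u + 2 * v) ^ 2" by simp
  thus ?thesis by (simp add: power2_eq_square algebra_simps)
qed

theorem mainTheorem10:
  fixes P :: "'x measure" and K :: nat and \<Omega> :: "nat \<Rightarrow> 'x set"
    and fs :: "nat \<Rightarrow> 'x \<Rightarrow> real" and B Bstu :: real
    and f :: "nat \<Rightarrow> 'p \<Rightarrow> 'x \<Rightarrow> real" and \<theta> :: "nat \<Rightarrow> 'p"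
    and a :: "nat \<Rightarrow> 'q \<Rightarrow> 'x \<Rightarrow> real" and \<phi> :: 'q
    and k :: nat and \<epsilon> \<tau> :: real
  assumes P: "prob_space P"
    and K: "K \<ge> 1"
    and \<Omega>_meas: "\<And>j. j \<in> {1..K} \<Longrightarrow> \<Omega> j \<in> sets P"
    and \<Omega>_disj: "\<And>i j. i \<in> {1..K} \<Longrightarrow> j \<in> {1..K} \<Longrightarrow> i \<noteq> j \<Longrightarrow> measure P (\<Omega> i \<inter> \<Omega> j) = 0"
    and \<Omega>_cover: "measure P (space P - (\<Union>j\<in>{1..K}. \<Omega> j)) = 0"
    and fs_meas: "\<And>j. j \<in> {1..K} \<Longrightarrow> fs j \<in> borel_measurable P"
    and mu_bdd: "AE x in P. \<bar>teacher K \<Omega> fs x\<bar> \<le> B"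
    and f_meas: "\<And>j. j \<in> {1..K} \<Longrightarrow> f j (\<theta> j) \<in> borel_measurable P"
    and f_bdd: "\<And>j t x. j \<in> {1..K} \<Longrightarrow> x \<in> space P \<Longrightarrow> \<bar>f j t x\<bar> \<le> Bstu"
    and a_meas: "\<And>j. j \<in> {1..K} \<Longrightarrow> a j \<phi> \<in> borel_measurable P"
    and k: "k \<in> {1..K}"
    and \<epsilon>: "0 < \<epsilon>" "\<epsilon> < 1/2"
    and \<tau>: "\<tau> > 0"
  defines "A \<equiv> \<Omega> k \<inter> confident P K a \<epsilon> \<tau> \<phi> \<inter> {x. gate K a \<tau> \<phi> k x \<ge> 1 - \<epsilon>}"
  shows "(\<integral>x. (teacher K \<Omega> fs x - moe K a f \<theta> \<phi> \<tau> x)\<^sup>2 * indicator A x \<partial>P)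
     \<ge> 1/2 * (\<integral>x. \<bar>f k (\<theta> k) x - fs k x\<bar>\<^sup>2 * indicator A x \<partial>P)
        - 4 * Bstu\<^sup>2 * \<epsilon>\<^sup>2 * measure P A"
proof -
  interpret prob_space P by (rule P)
  have gate_meas: "(\<lambda>x. gate K a \<tau> \<phi> j x) \<in> borel_measurable P" if "j \<in> {1..K}" for j
    unfolding gate_def using that a_meas
    by (intro borel_measurable_divide borel_measurable_sum borel_measurable_exp) auto
  have sp: "space P \<noteq> {}" by (rule not_empty)
  then obtain x0 where "x0 \<in> space P" by blast
  hence Bstu0: "0 \<le> Bstu" using f_bdd[OF k, of x0 "\<theta> k"] by linarith
  have Ak: "\<Omega> k \<subseteq> space P" using \<Omega>_meas[OF k] sets.sets_into_space by blast
  have A_eq: "A = \<Omega> k \<inter> {x\<in>space P. Max ((\<lambda>j. gate K a \<tau> \<phi> j x) ` {1..K}) > 1 - \<epsilon>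
       \<and> gate K a \<tau> \<phi> k x \<ge> 1 - \<epsilon>}"
    unfolding A_def confident_def by auto
  have maxm: "(\<lambda>x. Max ((\<lambda>j. gate K a \<tau> \<phi> j x) ` {1..K})) \<in> borel_measurable P"
    by (rule borel_measurable_Max) (auto intro: gate_meas)
  have A_meas: "A \<in> sets P"
    unfolding A_eq using \<Omega>_meas[OF k] maxm gate_meas[OF k] by measurable

  let ?t = "teacher K \<Omega> fs" and ?h = "moe K a f \<theta> \<phi> \<tau>" and ?p = "\<lambda>j x. gate K a \<tau> \<phi> j x"
  have t_meas: "?t \<in> borel_measurable P"
    unfolding teacher_def[abs_def] using \<Omega>_meas fs_meas
    by (intro borel_measurable_sum borel_measurable_times borel_measurable_indicator) auto
  have h_meas: "?h \<in> borel_measurable P"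
    unfolding moe_def[abs_def] using gate_meas f_meas
    by (intro borel_measurable_sum borel_measurable_times) auto
  have fk_meas: "f k (\<theta> k) \<in> borel_measurable P" using f_meas[OF k] .
  have fsk_meas: "fs k \<in> borel_measurable P" using fs_meas[OF k] .
  have p_pos: "?p j x \<ge> 0" for j x unfolding gate_def
    by (intro divide_nonneg_nonneg sum_nonneg) auto
  have p_sum: "(\<Sum>j\<in>{1..K}. ?p j x) = 1" for x
  proof -
    have "(\<Sum>j\<in>{1..K}. exp (a j \<phi> x / \<tau>)) > 0"
      using K by (intro sum_pos) auto
    thus ?thesis unfolding gate_def by (simp add: sum_divide_distrib[symmetric])
  qed
  have hbound: "\<bar>?h x - f k (\<theta> k) x\<bar> \<le> 2 * Bstu * \<epsilon>" if x: "x \<in> space P" "x \<in> A" for x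
  proof -
    have pk: "?p k x \<ge> 1 - \<epsilon>" using x(2) unfolding A_def by auto
    have "?h x - f k (\<theta> k) x = (\<Sum>j\<in>{1..K}. ?p j x * (f j (\<theta> j) x - f k (\<theta> k) x))"
    proof -
      have "(\<Sum>j\<in>{1..K}. ?p j x * f k (\<theta> k) x) = f k (\<theta> k) x"
        using p_sum[of x] by (simp add: sum_distrib_right[symmetric])
      thus ?thesis unfolding moe_def by (simp add: right_diff_distrib sum_subtractf)
    qed
    also have "\<bar>\<dots>\<bar> \<le> (\<Sum>j\<in>{1..K}. \<bar>?p j x * (f j (\<theta> j) x - f k (\<theta> k) x)\<bar>)"
      by (rule sum_abs)
    also have "\<dots> \<le> (\<Sum>j\<in>{1..K}-{k}. ?p j x * (2 * Bstu))"
    proof -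
      have "(\<Sum>j\<in>{1..K}. \<bar>?p j x * (f j (\<theta> j) x - f k (\<theta> k) x)\<bar>)
          = (\<Sum>j\<in>{1..K}-{k}. \<bar>?p j x * (f j (\<theta> j) x - f k (\<theta> k) x)\<bar>)"
        using k by (subst sum.remove[of _ k]) auto
      also have "\<dots> \<le> (\<Sum>j\<in>{1..K}-{k}. ?p j x * (2 * Bstu))"
      proof (rule sum_mono)
        fix j assume j: "j \<in> {1..K}-{k}"
        have "\<bar>f j (\<theta> j) x - f k (\<theta> k) x\<bar> \<le> 2 * Bstu"
          using f_bdd[of j x "\<theta> j"] f_bdd[OF k x(1), of "\<theta> k"] j x(1) by auto
        thus "\<bar>?p j x * (f j (\<theta> j) x - f k (\<theta> k) x)\<bar> \<le> ?p j x * (2 * Bstu)"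
          using p_pos[of j x] by (simp add: abs_mult mult_left_mono)
      qed
      finally show ?thesis .
    qed
    also have "\<dots> = (1 - ?p k x) * (2 * Bstu)"
      using p_sum[of x] k by (simp add: sum_distrib_right[symmetric] sum_diff1)
    also have "\<dots> \<le> \<epsilon> * (2 * Bstu)"
      using pk Bstu0 by (intro mult_right_mono) auto
    finally show ?thesis by (simp add: algebra_simps)
  qed
  define N where "N = (\<Union>j\<in>{1..K}-{k}. \<Omega> k \<inter> \<Omega> j)"
  have N_null: "N \<in> null_sets P"
    unfolding N_def
  proof (rule null_sets.finite_UN)
    fix j assume j: "j \<in> {1..K}-{k}"
    have m: "\<Omega> k \<inter> \<Omega> j \<in> sets P" using \<Omega>_meas k j by auto
    moreover have "measure P (\<Omega> k \<inter> \<Omega> j) = 0" using \<Omega>_disj[OF k, of j] j by auto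
    ultimately show "\<Omega> k \<inter> \<Omega> j \<in> null_sets P"
      by (simp add: null_sets_def emeasure_eq_measure)
  qed auto
  have tk: "?t x = fs k x" if "x \<in> \<Omega> k" "x \<notin> N" for x
  proof -
    have "?t x = (\<Sum>j\<in>{1..K}. indicator (\<Omega> j) x * fs j x)" unfolding teacher_def ..
    also have "\<dots> = indicator (\<Omega> k) x * fs k x + (\<Sum>j\<in>{1..K}-{k}. indicator (\<Omega> j) x * fs j x)"
      using k by (subst sum.remove[of _ k]) auto
    also have "(\<Sum>j\<in>{1..K}-{k}. indicator (\<Omega> j) x * fs j x) = 0"
      using that unfolding N_def by (intro sum.neutral) auto
    finally show ?thesis using that by simp
  qed
  have AEN: "AE x in P. x \<notin> N" using N_null by (rule AE_not_in)
  have pw: "AE x in P. (?t x - ?h x)\<^sup>2 * indicator A x \<ge>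
       1/2 * (\<bar>f k (\<theta> k) x - fs k x\<bar>\<^sup>2 * indicator A x) - 4 * Bstu\<^sup>2 * \<epsilon>\<^sup>2 * indicator A x"
    using AEN
  proof eventually_elim
    case (elim x)
    show ?case
    proof (cases "x \<in> A")
      case True
      hence xs: "x \<in> space P" "x \<in> \<Omega> k" using Ak unfolding A_def by auto
      have e: "?t x = fs k x" using tk[OF xs(2) elim] .
      have hb: "\<bar>?h x - f k (\<theta> k) x\<bar> \<le> 2 * Bstu * \<epsilon>" using hbound xs(1) True .
      have "(?h x - f k (\<theta> k) x)\<^sup>2 \<le> (2 * Bstu * \<epsilon>)\<^sup>2"
        using power_mono[OF hb abs_ge_zero, of 2] by simp
      hence h2: "(?h x - f k (\<theta> k) x)\<^sup>2 \<le> 4 * Bstu\<^sup>2 * \<epsilon>\<^sup>2" by (simp add: power_mult_distrib)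
      have "(?t x - ?h x)\<^sup>2 = ((fs k x - f k (\<theta> k) x) + (f k (\<theta> k) x - ?h x))\<^sup>2"
        using e by simp
      also have "\<dots> \<ge> 1/2 * (fs k x - f k (\<theta> k) x)\<^sup>2 - (f k (\<theta> k) x - ?h x)\<^sup>2"
        by (rule sq_split)
      finally have "(?t x - ?h x)\<^sup>2 \<ge> 1/2 * (fs k x - f k (\<theta> k) x)\<^sup>2 - (f k (\<theta> k) x - ?h x)\<^sup>2" .
      moreover have "(f k (\<theta> k) x - ?h x)\<^sup>2 = (?h x - f k (\<theta> k) x)\<^sup>2" by (simp add: power2_commute)
      moreover have "(fs k x - f k (\<theta> k) x)\<^sup>2 = \<bar>f k (\<theta> k) x - fs k x\<bar>\<^sup>2" by (simp add: power2_commute)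
      ultimately show ?thesis using True h2 by simp
    next
      case False thus ?thesis by simp
    qed
  qed
  have fsbA: "AE x in P. \<bar>fs k x * indicator A x\<bar> \<le> B"
    using AEN mu_bdd
  proof eventually_elim
    case (elim x)
    show ?case
    proof (cases "x \<in> A")
      case True
      hence "x \<in> \<Omega> k" unfolding A_def by auto
      thus ?thesis using tk[OF _ elim(1)] elim(2) True by simp
    next
      case False thus ?thesis using elim(2) by simp
    qed
  qed
  have int1: "integrable P (\<lambda>x. (?t x - ?h x)\<^sup>2 * indicator A x)"
  proof (rule Bochner_Integration.integrable_bound[OF integrable_const[of "(B + Bstu)\<^sup>2"]])
    show "(\<lambda>x. (?t x - ?h x)\<^sup>2 * indicator A x) \<in> borel_measurable P"
      using t_meas h_meas A_meas by measurable
    show "AE x in P. norm ((?t x - ?h x)\<^sup>2 * indicator A x) \<le> norm ((B + Bstu)\<^sup>2)"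
      using mu_bdd AE_space
    proof eventually_elim
      case (elim x)
      have hb: "\<bar>?h x\<bar> \<le> Bstu"
      proof -
        have "\<bar>?h x\<bar> \<le> (\<Sum>j\<in>{1..K}. \<bar>?p j x * f j (\<theta> j) x\<bar>)" unfolding moe_def by (rule sum_abs)
        also have "\<dots> \<le> (\<Sum>j\<in>{1..K}. ?p j x * Bstu)"
          using f_bdd elim(2) p_pos by (intro sum_mono) (simp add: abs_mult mult_left_mono)
        also have "\<dots> = Bstu" using p_sum[of x] by (simp add: sum_distrib_right[symmetric])
        finally show ?thesis .
      qed
      have "\<bar>?t x - ?h x\<bar> \<le> B + Bstu" using hb elim(1) by linarith
      hence "(?t x - ?h x)\<^sup>2 \<le> (B + Bstu)\<^sup>2"
        using power_mono[OF _ abs_ge_zero, of "?t x - ?h x" "B + Bstu" 2] by simp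
      thus ?case by (simp add: indicator_def)
    qed
  qed
  have int2: "integrable P (\<lambda>x. \<bar>f k (\<theta> k) x - fs k x\<bar>\<^sup>2 * indicator A x)"
  proof (rule Bochner_Integration.integrable_bound[OF integrable_const[of "(B + Bstu)\<^sup>2"]])
    show "(\<lambda>x. \<bar>f k (\<theta> k) x - fs k x\<bar>\<^sup>2 * indicator A x) \<in> borel_measurable P"
      using fk_meas fsk_meas A_meas by measurable
    show "AE x in P. norm (\<bar>f k (\<theta> k) x - fs k x\<bar>\<^sup>2 * indicator A x) \<le> norm ((B + Bstu)\<^sup>2)"
      using fsbA AE_space
    proof eventually_elim
      case (elim x)
      show ?case
      proof (cases "x \<in> A")
        case True
        have "\<bar>f k (\<theta> k) x - fs k x\<bar> \<le> B + Bstu"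
          using elim(1) True f_bdd[OF k elim(2), of "\<theta> k"] by simp
        hence "\<bar>f k (\<theta> k) x - fs k x\<bar>\<^sup>2 \<le> (B + Bstu)\<^sup>2"
          using power_mono[OF _ abs_ge_zero, of "f k (\<theta> k) x - fs k x" "B + Bstu" 2] by simp
        thus ?thesis using True by simp
      next
        case False thus ?thesis by simp
      qed
    qed
  qed
  have int3: "integrable P (\<lambda>x. 4 * Bstu\<^sup>2 * \<epsilon>\<^sup>2 * indicator A x)"
    using A_meas by (intro integrable_mult_right integrable_real_indicator) (auto simp: emeasure_eq_measure)
  have "(\<integral>x. (?t x - ?h x)\<^sup>2 * indicator A x \<partial>P) \<ge>
      (\<integral>x. 1/2 * (\<bar>f k (\<theta> k) x - fs k x\<bar>\<^sup>2 * indicator A x) - 4 * Bstu\<^sup>2 * \<epsilon>\<^sup>2 * indicator A x \<partial>P)"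
    using pw int1 int2 int3 by (intro integral_mono_AE) auto
  also have "(\<integral>x. 1/2 * (\<bar>f k (\<theta> k) x - fs k x\<bar>\<^sup>2 * indicator A x) - 4 * Bstu\<^sup>2 * \<epsilon>\<^sup>2 * indicator A x \<partial>P)
      = 1/2 * (\<integral>x. \<bar>f k (\<theta> k) x - fs k x\<bar>\<^sup>2 * indicator A x \<partial>P) - 4 * Bstu\<^sup>2 * \<epsilon>\<^sup>2 * measure P A"
    using int2 int3 A_meas by (simp add: Bochner_Integration.integral_diff)
  finally show ?thesis .
qed

end
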